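(* Let $\{A_n\}_{n\geqslant 1}$ be i.i.d. nonnegative random variables with Laplace–Stieltjes transform $\alpha(s)=\mathbb{E}[e^{-sA_1}]$, and let $\{B_n\}_{n\geqslant 1}$ be i.i.d. exponentially distributed with rate $\mu>0$, independent of $\{A_n\}$. Let $W_1=w_1\geqslant 0$ be deterministic and $W_{n+1}=\max\{0,\,B_{n+1}-A_n-W_n\}$ for $n\geqslant 1$. Then for every $n\geqslant 1$ and $x\geqslant 0$, $$\mathbb{P}[W_{n+1}\leqslant x]=1-e^{-\mu x}\left[\frac{2\alpha(\mu)}{2+\alpha(\mu)}+\left(-\frac{\alpha(\mu)}{2}\right)^{n-1}\left(\frac{2-\alpha(\mu)}{2+\alpha(\mu)}-\mathbb{P}[W_2=0]\right)\right],$$ where $\mathbb{P}[W_2=0]=1-e^{-\mu w_1}\alpha(\mu)$. *)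

theory Defs
  imports "HOL-Probability.Probability"
begin

end

theory Submission
  imports Defs
begin
lemma (in prob_space) indep_nn_fubini:
  fixes X Y :: "'a \<Rightarrow> real" and h :: "real \<times> real \<Rightarrow> ennreal"
  assumes ind: "indep_var borel X borel Y" and h[measurable]: "h \<in> borel_measurable (borel \<Otimes>\<^sub>M borel)"
  shows "(\<integral>\<^sup>+\<omega>. h (X \<omega>, Y \<omega>) \<partial>M) = (\<integral>\<^sup>+\<omega>. (\<integral>\<^sup>+\<omega>'. h (X \<omega>', Y \<omega>) \<partial>M) \<partial>M)"
proof -
  have rvX[measurable]: "X \<in> borel_measurable M" and rvY[measurable]: "Y \<in> borel_measurable M"
    and eq: "distr M borel X \<Otimes>\<^sub>M distr M borel Y = distr M (borel \<Otimes>\<^sub>M borel) (\<lambda>x. (X x, Y x))"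
    using ind unfolding indep_var_distribution_eq by auto
  interpret PX: prob_space "distr M borel X" by (rule prob_space_distr) simp
  interpret PY: prob_space "distr M borel Y" by (rule prob_space_distr) simp
  interpret PP: pair_prob_space "distr M borel X" "distr M borel Y" ..
  have hm: "h \<in> borel_measurable (distr M borel X \<Otimes>\<^sub>M distr M borel Y)"
  proof -
    have "sets (distr M borel X \<Otimes>\<^sub>M distr M borel Y) = sets (borel \<Otimes>\<^sub>M borel)"
      by (intro sets_pair_measure_cong) auto
    from measurable_cong_sets[OF this refl] h show ?thesis by simp
  qed
  have "(\<integral>\<^sup>+\<omega>. h (X \<omega>, Y \<omega>) \<partial>M) = (\<integral>\<^sup>+z. h z \<partial>distr M (borel \<Otimes>\<^sub>M borel) (\<lambda>x. (X x, Y x)))"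
    by (subst nn_integral_distr) auto
  also have "\<dots> = (\<integral>\<^sup>+z. h z \<partial>(distr M borel X \<Otimes>\<^sub>M distr M borel Y))"
    by (simp add: eq)
  also have "\<dots> = (\<integral>\<^sup>+y. (\<integral>\<^sup>+x. h (x, y) \<partial>distr M borel X) \<partial>distr M borel Y)"
    by (rule PP.nn_integral_snd[OF hm, symmetric])
  also have "\<dots> = (\<integral>\<^sup>+\<omega>. (\<integral>\<^sup>+x. h (x, Y \<omega>) \<partial>distr M borel X) \<partial>M)"
    by (subst nn_integral_distr) (auto intro!: PX.borel_measurable_nn_integral)
  also have "\<dots> = (\<integral>\<^sup>+\<omega>. (\<integral>\<^sup>+\<omega>'. h (X \<omega>', Y \<omega>) \<partial>M) \<partial>M)"
    by (subst nn_integral_distr) auto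
  finally show ?thesis .
qed

lemma (in prob_space) nn_bounded:
  fixes f :: "'a \<Rightarrow> real"
  assumes [measurable]: "f \<in> borel_measurable M" and "\<And>\<omega>. \<omega> \<in> space M \<Longrightarrow> 0 \<le> f \<omega> \<and> f \<omega> \<le> 1"
  shows "(\<integral>\<^sup>+\<omega>. ennreal (f \<omega>) \<partial>M) = ennreal (expectation f)"
proof (rule nn_integral_eq_integral)
  show "integrable M f"
    by (rule integrable_const_bound[where B=1]) (use assms in auto)
qed (use assms in auto)

lemma exp_laplace:
  fixes \<mu> c :: real
  assumes mu: "\<mu> > 0" and c: "c \<ge> 0"
  shows "(\<integral>\<^sup>+x. ennreal (exponential_density \<mu> x) * ennreal (exp (-\<mu> * max 0 (x - c))) \<partial>lborel)
     = ennreal (1 - exp (-\<mu> * c) / 2)"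
proof -
  have pw: "ennreal (exponential_density \<mu> x) * ennreal (exp (-\<mu> * max 0 (x - c))) =
      ennreal (\<mu> * exp (-\<mu> * x)) * indicator {0..c} x
    + ennreal (\<mu> * exp (\<mu> * c) * exp (-(2*\<mu>) * x)) * indicator {c<..} x" for x
  proof -
    consider "x < 0" | "0 \<le> x" "x \<le> c" | "c < x" by linarith
    then show ?thesis
    proof cases
      case 1 then show ?thesis using c by (auto simp: exponential_density_def indicator_def)
    next
      case 2 then show ?thesis using c mu
        by (auto simp: exponential_density_def indicator_def ennreal_mult'[symmetric] mult.commute)
    next
      case 3
      then have "\<mu> * exp (- x * \<mu>) * exp (- \<mu> * (x - c)) = \<mu> * exp (\<mu> * c) * exp (-(2*\<mu>) * x)"
        by (simp add: exp_add[symmetric] algebra_simps)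
      then show ?thesis using 3 c mu
        by (auto simp: exponential_density_def indicator_def ennreal_mult'[symmetric])
    qed
  qed
  have I1: "(\<integral>\<^sup>+x. ennreal (\<mu> * exp (-\<mu> * x)) * indicator {0..c} x \<partial>lborel) = ennreal (1 - exp (-\<mu> * c))"
  proof -
    have "(\<integral>\<^sup>+x. ennreal (\<mu> * exp (-\<mu> * x)) * indicator {0..c} x \<partial>lborel) = ennreal ((\<lambda>x. - exp (-\<mu> * x)) c - (\<lambda>x. - exp (-\<mu> * x)) 0)"
      by (rule nn_integral_FTC_Icc) (use mu c in \<open>auto intro!: derivative_eq_intros\<close>)
    then show ?thesis by simp
  qed
  have I2: "(\<integral>\<^sup>+x. ennreal (\<mu> * exp (\<mu> * c) * exp (-(2*\<mu>) * x)) * indicator {c<..} x \<partial>lborel) = ennreal (exp (-\<mu> * c) / 2)"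
  proof -
    have "(\<integral>\<^sup>+x. ennreal (\<mu> * exp (\<mu> * c) * exp (-(2*\<mu>) * x)) * indicator {c<..} x \<partial>lborel)
       = (\<integral>\<^sup>+x. ennreal (\<mu> * exp (\<mu> * c) * exp (-(2*\<mu>) * x)) * indicator {c..} x \<partial>lborel)"
      by (intro nn_integral_cong_AE eventually_mono[OF AE_lborel_singleton[of c]]) (auto simp: indicator_def)
    also have "\<dots> = ennreal (0 - (\<lambda>x. - exp (\<mu> * c) * exp (-(2*\<mu>) * x) / 2) c)"
    proof (rule nn_integral_FTC_atLeast[where F="\<lambda>x. - exp (\<mu> * c) * exp (-(2*\<mu>) * x) / 2" and T=0])
      show "((\<lambda>x. - exp (\<mu> * c) * exp (-(2*\<mu>) * x) / 2) \<longlongrightarrow> 0) at_top"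
      proof -
        have "LIM x at_top. (-(2*\<mu>)) * x :> at_bot"
          by (rule filterlim_tendsto_neg_mult_at_bot[OF tendsto_const]) (use mu in \<open>auto simp: filterlim_ident\<close>)
        then have "((\<lambda>x. exp (-(2*\<mu>) * x)) \<longlongrightarrow> 0) at_top"
          by (rule filterlim_compose[OF exp_at_bot])
        then have "((\<lambda>x. - exp (\<mu> * c) * exp (-(2*\<mu>) * x) / 2) \<longlongrightarrow> - exp (\<mu> * c) * 0 / 2) at_top"
          by (intro tendsto_intros) auto
        then show ?thesis by simp
      qed
      show "DERIV (\<lambda>x. - exp (\<mu> * c) * exp (-(2*\<mu>) * x) / 2) x :> \<mu> * exp (\<mu> * c) * exp (-(2*\<mu>) * x)" for x
        by (auto intro!: derivative_eq_intros simp: field_simps)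
      show "\<And>x. c \<le> x \<Longrightarrow> 0 \<le> \<mu> * exp (\<mu> * c) * exp (-(2*\<mu>) * x)" using mu by simp
      show "(\<lambda>x. \<mu> * exp (\<mu> * c) * exp (-(2*\<mu>) * x)) \<in> borel_measurable borel" by measurable
    qed
    moreover have "exp (\<mu> * c) * exp (-(2*\<mu>) * c) = exp (-\<mu> * c)"
      by (simp add: exp_add[symmetric])
    ultimately show ?thesis by simp
  qed
  have "(\<integral>\<^sup>+x. ennreal (exponential_density \<mu> x) * ennreal (exp (-\<mu> * max 0 (x - c))) \<partial>lborel)
     = (\<integral>\<^sup>+x. ennreal (\<mu> * exp (-\<mu> * x)) * indicator {0..c} x
    + ennreal (\<mu> * exp (\<mu> * c) * exp (-(2*\<mu>) * x)) * indicator {c<..} x \<partial>lborel)"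
    by (simp only: pw)
  also have "\<dots> = (\<integral>\<^sup>+x. ennreal (\<mu> * exp (-\<mu> * x)) * indicator {0..c} x \<partial>lborel)
     + (\<integral>\<^sup>+x. ennreal (\<mu> * exp (\<mu> * c) * exp (-(2*\<mu>) * x)) * indicator {c<..} x \<partial>lborel)"
    by (rule nn_integral_add) auto
  also have "\<dots> = ennreal (1 - exp (-\<mu> * c) + exp (-\<mu> * c) / 2)"
    unfolding I1 I2 using c mu by (subst ennreal_plus) auto
  finally show ?thesis by simp
qed


lemma step_alg: "(2::real) + a \<noteq> 0 \<Longrightarrow> a - a / 2 * (2 * a / (2 + a) + t) = 2 * a / (2 + a) + (- a / 2) * t"
  by (simp add: field_simps)

primrec wfn :: "real \<Rightarrow> nat \<Rightarrow> (nat + nat \<Rightarrow> real) \<Rightarrow> real" where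
  "wfn w 0 y = w"
| "wfn w (Suc n) y = (if n = 0 then w else max 0 (y (Inr (Suc n)) - y (Inl n) - wfn w n y))"

definition JJ :: "nat \<Rightarrow> (nat + nat) set" where "JJ n = Inl ` {1..<n} \<union> Inr ` {1..n}"

lemma wfn_cong: "(\<And>i. i \<in> JJ n \<Longrightarrow> y i = y' i) \<Longrightarrow> wfn w n y = wfn w n y'"
proof (induction n)
  case 0 then show ?case by simp
next
  case (Suc n)
  have "JJ n \<subseteq> JJ (Suc n)" by (auto simp: JJ_def)
  with Suc have IH: "wfn w n y = wfn w n y'" by auto
  show ?case
  proof (cases "n = 0")
    case False
    then have "Inr (Suc n) \<in> JJ (Suc n)" "Inl n \<in> JJ (Suc n)" by (auto simp: JJ_def)
    with Suc.prems IH show ?thesis by simp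
  qed simp
qed

lemma wfn_meas: "JJ n \<subseteq> K \<Longrightarrow> wfn w n \<in> borel_measurable (PiM K (\<lambda>_. borel))"
proof (induction n)
  case 0 then show ?case by simp
next
  case (Suc n)
  have "JJ n \<subseteq> JJ (Suc n)" by (auto simp: JJ_def)
  with Suc have IH[measurable]: "wfn w n \<in> borel_measurable (PiM K (\<lambda>_. borel))" by auto
  show ?case
  proof (cases "n = 0")
    case False
    then have "Inr (Suc n) \<in> K" "Inl n \<in> K" using Suc.prems by (auto simp: JJ_def)
    note m1 = measurable_component_singleton[OF this(1), of "\<lambda>_. borel"]
      and m2 = measurable_component_singleton[OF this(2), of "\<lambda>_. borel"]
    have "(\<lambda>y. max 0 (y (Inr (Suc n)) - y (Inl n) - wfn w n y)) \<in> borel_measurable (PiM K (\<lambda>_. borel))"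
      using m1 m2 by measurable
    then show ?thesis using False by simp
  qed simp
qed

theorem theorem3p1:
  fixes M :: "'a measure" and A B W :: "nat \<Rightarrow> 'a \<Rightarrow> real"
    and \<mu> w1 :: real and \<alpha> :: "real \<Rightarrow> real"
  assumes "prob_space M"
    and A_rv: "\<And>n. n \<ge> 1 \<Longrightarrow> A n \<in> borel_measurable M"
    and A_nonneg: "\<And>n \<omega>. n \<ge> 1 \<Longrightarrow> \<omega> \<in> space M \<Longrightarrow> A n \<omega> \<ge> 0"
    and A_ident: "\<And>n. n \<ge> 1 \<Longrightarrow> distr M borel (A n) = distr M borel (A 1)"
    and \<mu>_pos: "\<mu> > 0"
    and B_exp: "\<And>n. n \<ge> 1 \<Longrightarrow> distributed M lborel (B n) (exponential_density \<mu>)"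
    and indep: "prob_space.indep_vars M (\<lambda>_. borel)
                  (\<lambda>i. case i of Inl n \<Rightarrow> A n | Inr n \<Rightarrow> B n)
                  (Inl ` {1..} \<union> Inr ` {1..})"
    and \<alpha>_def: "\<And>s. \<alpha> s = prob_space.expectation M (\<lambda>\<omega>. exp (- s * A 1 \<omega>))"
    and w1_nonneg: "w1 \<ge> 0"
    and W1: "\<And>\<omega>. W 1 \<omega> = w1"
    and W_rec: "\<And>n \<omega>. n \<ge> 1 \<Longrightarrow> W (n + 1) \<omega> = max 0 (B (n + 1) \<omega> - A n \<omega> - W n \<omega>)"
  shows "measure M {\<omega> \<in> space M. W 2 \<omega> = 0} = 1 - exp (- \<mu> * w1) * \<alpha> \<mu>
    \<and> (\<forall>n x. n \<ge> 1 \<longrightarrow> x \<ge> 0 \<longrightarrow>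
         measure M {\<omega> \<in> space M. W (n + 1) \<omega> \<le> x}
         = 1 - exp (- \<mu> * x) *
             (2 * \<alpha> \<mu> / (2 + \<alpha> \<mu>)
              + (- \<alpha> \<mu> / 2) ^ (n - 1)
                * ((2 - \<alpha> \<mu>) / (2 + \<alpha> \<mu>) - measure M {\<omega> \<in> space M. W 2 \<omega> = 0})))"
proof -
  interpret P: prob_space M by fact
  define X where "X = (\<lambda>i. case i of Inl n \<Rightarrow> A n | Inr n \<Rightarrow> B n)"
  define I where "I = Inl ` {1::nat..} \<union> Inr ` {1::nat..}"
  have indX: "P.indep_vars (\<lambda>_. borel) X I" using indep unfolding X_def I_def .
  have Bm[measurable]: "B n \<in> borel_measurable M" if "n \<ge> 1" for n
    using distributed_measurable[OF B_exp[OF that]] by simp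
  have Am[measurable]: "A n \<in> borel_measurable M" if "n \<ge> 1" for n using A_rv that .
  have Wm[measurable]: "W n \<in> borel_measurable M" if "n \<ge> 1" for n
    using that
  proof (induction n)
    case (Suc n)
    show ?case
    proof (cases "n = 0")
      case True
      then have "W (Suc n) = (\<lambda>_. w1)" using W1 by auto
      then show ?thesis by simp
    next
      case False
      then have "W (Suc n) = (\<lambda>\<omega>. max 0 (B (Suc n) \<omega> - A n \<omega> - W n \<omega>))"
        using W_rec[of n] by auto
      moreover have "A n \<in> borel_measurable M" "B (Suc n) \<in> borel_measurable M" "W n \<in> borel_measurable M"
        using False Suc by auto
      ultimately show ?thesis by simp
    qed
  qed simp
  have Wnn: "W n \<omega> \<ge> 0" if "n \<ge> 1" for n \<omega>
  proof (cases n)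
    case (Suc m) then show ?thesis
      using W_rec[of m \<omega>] W1 w1_nonneg by (cases "m = 0") auto
  qed (use that in simp)
  have W_eq: "W n \<omega> = wfn w1 n (\<lambda>i. X i \<omega>)" if "n \<ge> 1" for n \<omega>
    using that
  proof (induction n)
    case (Suc n)
    show ?case
    proof (cases "n = 0")
      case True then show ?thesis using W1 by simp
    next
      case False
      then show ?thesis using W_rec[of n \<omega>] Suc by (simp add: X_def)
    qed
  qed simp
  have JJI: "JJ n \<subseteq> I" for n by (auto simp: JJ_def I_def)
  have W_restr: "W n \<omega> = wfn w1 n (restrict (\<lambda>i. X i \<omega>) K)" if "n \<ge> 1" "JJ n \<subseteq> K" for n \<omega> K
    using W_eq[OF that(1)] that(2) by (auto intro!: wfn_cong)
  have indA: "P.indep_var borel (A n) borel (W n)" if n: "n \<ge> 1" for n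
  proof -
    have "P.indep_var (PiM {Inl n} (\<lambda>_. borel)) (\<lambda>\<omega>. restrict (\<lambda>i. X i \<omega>) {Inl n})
        (PiM (JJ n) (\<lambda>_. borel)) (\<lambda>\<omega>. restrict (\<lambda>i. X i \<omega>) (JJ n))"
      by (rule P.indep_var_restrict[OF indX]) (use n JJI in \<open>auto simp: JJ_def I_def\<close>)
    from P.indep_var_compose[OF this measurable_component_singleton[of "Inl n" "{Inl n}" "\<lambda>_. borel"] wfn_meas[of n "JJ n" w1]]
    have "P.indep_var borel ((\<lambda>y. y (Inl n)) \<circ> (\<lambda>\<omega>. restrict (\<lambda>i. X i \<omega>) {Inl n}))
       borel (wfn w1 n \<circ> (\<lambda>\<omega>. restrict (\<lambda>i. X i \<omega>) (JJ n)))" by simp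
    moreover have "(\<lambda>y. y (Inl n)) \<circ> (\<lambda>\<omega>. restrict (\<lambda>i. X i \<omega>) {Inl n}) = A n"
      by (auto simp: X_def)
    moreover have "wfn w1 n \<circ> (\<lambda>\<omega>. restrict (\<lambda>i. X i \<omega>) (JJ n)) = W n"
      using W_restr[OF n order_refl] by (auto simp: fun_eq_iff)
    ultimately show ?thesis by simp
  qed
  have indB: "P.indep_var borel (B (n+1)) borel (\<lambda>\<omega>. A n \<omega> + W n \<omega>)" if n: "n \<ge> 1" for n
  proof -
    have "P.indep_var (PiM {Inr (n+1)} (\<lambda>_. borel)) (\<lambda>\<omega>. restrict (\<lambda>i. X i \<omega>) {Inr (n+1)})
        (PiM (insert (Inl n) (JJ n)) (\<lambda>_. borel)) (\<lambda>\<omega>. restrict (\<lambda>i. X i \<omega>) (insert (Inl n) (JJ n)))"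
      by (rule P.indep_var_restrict[OF indX]) (use n JJI in \<open>auto simp: JJ_def I_def\<close>)
    moreover have "(\<lambda>y. y (Inl n) + wfn w1 n y) \<in> borel_measurable (PiM (insert (Inl n) (JJ n)) (\<lambda>_. borel))"
    proof -
      note [measurable] = measurable_component_singleton[of "Inl n" "insert (Inl n) (JJ n)" "\<lambda>_. borel"]
        wfn_meas[of n "insert (Inl n) (JJ n)" w1]
      show ?thesis by measurable auto
    qed
    ultimately have "P.indep_var borel ((\<lambda>y. y (Inr (n+1))) \<circ> (\<lambda>\<omega>. restrict (\<lambda>i. X i \<omega>) {Inr (n+1)}))
       borel ((\<lambda>y. y (Inl n) + wfn w1 n y) \<circ> (\<lambda>\<omega>. restrict (\<lambda>i. X i \<omega>) (insert (Inl n) (JJ n))))"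
      by (intro P.indep_var_compose measurable_component_singleton) auto
    moreover have "(\<lambda>y. y (Inr (n+1))) \<circ> (\<lambda>\<omega>. restrict (\<lambda>i. X i \<omega>) {Inr (n+1)}) = B (n+1)"
      by (auto simp: X_def)
    moreover have "(\<lambda>y. y (Inl n) + wfn w1 n y) \<circ> (\<lambda>\<omega>. restrict (\<lambda>i. X i \<omega>) (insert (Inl n) (JJ n)))
        = (\<lambda>\<omega>. A n \<omega> + W n \<omega>)"
      using W_restr[OF n subset_insertI] by (auto simp: X_def fun_eq_iff)
    ultimately show ?thesis by simp
  qed
  define a where "a = \<alpha> \<mu>"
  define E where "E n = P.expectation (\<lambda>\<omega>. exp (- \<mu> * W n \<omega>))" for n
  define C where "C n \<omega> = A n \<omega> + W n \<omega>" for n \<omega>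
  have Cnn: "C n \<omega> \<ge> 0" if "n \<ge> 1" "\<omega> \<in> space M" for n \<omega>
    using A_nonneg[OF that] Wnn[OF that(1)] by (simp add: C_def)
  have Cm[measurable]: "C n \<in> borel_measurable M" if "n \<ge> 1" for n
    using that unfolding C_def[abs_def] by measurable
  have bnd: "0 \<le> exp (- \<mu> * t) \<and> exp (- \<mu> * t) \<le> 1" if "t \<ge> 0" for t
    using that \<mu>_pos by (simp add: mult_nonneg_nonneg)
  have int_exp: "integrable M (\<lambda>\<omega>. exp (- \<mu> * f \<omega>))"
    if [measurable]: "f \<in> borel_measurable M" and "\<And>\<omega>. \<omega> \<in> space M \<Longrightarrow> f \<omega> \<ge> 0" for f
    by (rule P.integrable_const_bound[where B=1]) (use that bnd in auto)
  have Lexp: "P.expectation (\<lambda>\<omega>. exp (- \<mu> * A n \<omega>)) = a" if n: "n \<ge> 1" for n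
  proof -
    have "P.expectation (\<lambda>\<omega>. exp (- \<mu> * A n \<omega>)) = integral\<^sup>L (distr M borel (A n)) (\<lambda>x. exp (- \<mu> * x))"
      by (subst integral_distr) (use n in auto)
    also have "\<dots> = integral\<^sup>L (distr M borel (A 1)) (\<lambda>x. exp (- \<mu> * x))"
      using A_ident[OF n] by simp
    also have "\<dots> = P.expectation (\<lambda>\<omega>. exp (- \<mu> * A 1 \<omega>))"
      by (subst integral_distr) auto
    finally show ?thesis using \<alpha>_def a_def by simp
  qed
  have a_nn: "a \<ge> 0"
    using Lexp[of 1] by (metis Bochner_Integration.integral_nonneg exp_ge_zero order_refl)
  have F1: "P.expectation (\<lambda>\<omega>. exp (- \<mu> * C n \<omega>)) = a * E n" if n: "n \<ge> 1" for n
  proof -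
    have ind': "P.indep_var borel ((\<lambda>x. exp (- \<mu> * x)) \<circ> A n) borel ((\<lambda>x. exp (- \<mu> * x)) \<circ> W n)"
      by (rule P.indep_var_compose[OF indA[OF n]]) auto
    have "P.expectation (\<lambda>\<omega>. exp (- \<mu> * C n \<omega>)) = P.expectation (\<lambda>\<omega>. ((\<lambda>x. exp (- \<mu> * x)) \<circ> A n) \<omega> * ((\<lambda>x. exp (- \<mu> * x)) \<circ> W n) \<omega>)"
      by (simp add: C_def distrib_left exp_add[symmetric])
    also have "\<dots> = P.expectation ((\<lambda>x. exp (- \<mu> * x)) \<circ> A n) * P.expectation ((\<lambda>x. exp (- \<mu> * x)) \<circ> W n)"
    proof (rule P.indep_var_lebesgue_integral[OF ind'])
      show "integrable M ((\<lambda>x. exp (- \<mu> * x)) \<circ> A n)" unfolding comp_def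
        by (rule int_exp) (use n A_nonneg in auto)
      show "integrable M ((\<lambda>x. exp (- \<mu> * x)) \<circ> W n)" unfolding comp_def
        by (rule int_exp) (use n Wnn in auto)
    qed
    finally show ?thesis using Lexp[OF n] by (simp add: comp_def E_def)
  qed
  have F2: "measure M {\<omega> \<in> space M. W (n + 1) \<omega> \<le> x} = 1 - exp (- \<mu> * x) * (a * E n)"
    if n: "n \<ge> 1" and x: "x \<ge> 0" for n x
  proof -
    define h where "h = (\<lambda>z::real \<times> real. indicator {z. max 0 (fst z - snd z) \<le> x} z :: ennreal)"
    have hm: "h \<in> borel_measurable (borel \<Otimes>\<^sub>M borel)" unfolding h_def by measurable
    have "emeasure M {\<omega> \<in> space M. W (n + 1) \<omega> \<le> x} = (\<integral>\<^sup>+\<omega>. indicator {\<omega> \<in> space M. W (n + 1) \<omega> \<le> x} \<omega> \<partial>M)"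
      by (rule nn_integral_indicator[symmetric]) (use n in auto)
    also have "\<dots> = (\<integral>\<^sup>+\<omega>. h (B (n+1) \<omega>, C n \<omega>) \<partial>M)"
    proof (rule nn_integral_cong)
      fix \<omega>
      have Wr: "W (Suc n) \<omega> = max 0 (B (Suc n) \<omega> - C n \<omega>)" using W_rec[OF n, of \<omega>] by (simp add: C_def)
      show "indicator {\<omega> \<in> space M. W (n + 1) \<omega> \<le> x} \<omega> = h (B (n+1) \<omega>, C n \<omega>)" if "\<omega> \<in> space M"
        using that x by (auto simp: h_def Wr indicator_def)
    qed
    also have "\<dots> = (\<integral>\<^sup>+\<omega>. (\<integral>\<^sup>+\<omega>'. h (B (n+1) \<omega>', C n \<omega>) \<partial>M) \<partial>M)"
      by (rule P.indep_nn_fubini[OF _ hm]) (use indB[OF n] in \<open>simp add: C_def[abs_def]\<close>)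
    also have "\<dots> = (\<integral>\<^sup>+\<omega>. ennreal (1 - exp (- \<mu> * x) * exp (- \<mu> * C n \<omega>)) \<partial>M)"
    proof (rule nn_integral_cong)
      fix \<omega> assume \<omega>: "\<omega> \<in> space M"
      have "(\<integral>\<^sup>+\<omega>'. h (B (n+1) \<omega>', C n \<omega>) \<partial>M) = (\<integral>\<^sup>+\<omega>'. indicator {\<omega>' \<in> space M. B (n+1) \<omega>' \<le> x + C n \<omega>} \<omega>' \<partial>M)"
        by (rule nn_integral_cong) (use x in \<open>auto simp: h_def indicator_def\<close>)
      also have "\<dots> = emeasure M {\<omega>' \<in> space M. B (n+1) \<omega>' \<le> x + C n \<omega>}"
        by (rule nn_integral_indicator) (use n in auto)
      also have "\<dots> = ennreal (P.prob {\<omega>' \<in> space M. B (n+1) \<omega>' \<le> x + C n \<omega>})"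
        by (rule P.emeasure_eq_measure)
      also have "P.prob {\<omega>' \<in> space M. B (n+1) \<omega>' \<le> x + C n \<omega>} = 1 - exp (- (x + C n \<omega>) * \<mu>)"
        using P.exponential_distributedD_le[OF B_exp[of "n+1"] _ \<mu>_pos, of "x + C n \<omega>"] n x Cnn[OF n \<omega>] by simp
      also have "exp (- (x + C n \<omega>) * \<mu>) = exp (- \<mu> * x) * exp (- \<mu> * C n \<omega>)"
        by (simp add: exp_add[symmetric] algebra_simps)
      finally show "(\<integral>\<^sup>+\<omega>'. h (B (n+1) \<omega>', C n \<omega>) \<partial>M) = ennreal (1 - exp (- \<mu> * x) * exp (- \<mu> * C n \<omega>))" .
    qed
    also have "\<dots> = ennreal (P.expectation (\<lambda>\<omega>. 1 - exp (- \<mu> * x) * exp (- \<mu> * C n \<omega>)))"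
    proof (rule P.nn_bounded)
      fix \<omega> assume "\<omega> \<in> space M"
      then have "0 \<le> exp (- \<mu> * C n \<omega>) \<and> exp (- \<mu> * C n \<omega>) \<le> 1" using bnd Cnn[OF n] by auto
      moreover have "0 \<le> exp (- \<mu> * x) \<and> exp (- \<mu> * x) \<le> 1" using bnd x by auto
      ultimately show "0 \<le> 1 - exp (- \<mu> * x) * exp (- \<mu> * C n \<omega>) \<and> 1 - exp (- \<mu> * x) * exp (- \<mu> * C n \<omega>) \<le> 1"
        by (simp add: mult_le_one)
    qed (use n in auto)
    finally have em: "emeasure M {\<omega> \<in> space M. W (n + 1) \<omega> \<le> x} = ennreal (P.expectation (\<lambda>\<omega>. 1 - exp (- \<mu> * x) * exp (- \<mu> * C n \<omega>)))" .
    have ev: "P.expectation (\<lambda>\<omega>. 1 - exp (- \<mu> * x) * exp (- \<mu> * C n \<omega>)) = 1 - exp (- \<mu> * x) * (a * E n)"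
    proof -
      have "integrable M (\<lambda>\<omega>. exp (- \<mu> * C n \<omega>))" by (rule int_exp) (use n Cnn in auto)
      then have "P.expectation (\<lambda>\<omega>. 1 - exp (- \<mu> * x) * exp (- \<mu> * C n \<omega>)) = 1 - exp (- \<mu> * x) * P.expectation (\<lambda>\<omega>. exp (- \<mu> * C n \<omega>))"
        by (subst Bochner_Integration.integral_diff) (auto simp: P.prob_space)
      then show ?thesis using F1[OF n] by simp
    qed
    have nn: "0 \<le> P.expectation (\<lambda>\<omega>. 1 - exp (- \<mu> * x) * exp (- \<mu> * C n \<omega>))"
    proof (rule Bochner_Integration.integral_nonneg)
      fix \<omega> assume "\<omega> \<in> space M"
      then have "0 \<le> exp (- \<mu> * C n \<omega>) \<and> exp (- \<mu> * C n \<omega>) \<le> 1" using bnd Cnn[OF n] by auto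
      moreover have "0 \<le> exp (- \<mu> * x) \<and> exp (- \<mu> * x) \<le> 1" using bnd x by auto
      ultimately show "0 \<le> 1 - exp (- \<mu> * x) * exp (- \<mu> * C n \<omega>)"
        by (simp add: mult_le_one)
    qed
    have "measure M {\<omega> \<in> space M. W (n + 1) \<omega> \<le> x} = P.expectation (\<lambda>\<omega>. 1 - exp (- \<mu> * x) * exp (- \<mu> * C n \<omega>))"
      using em nn by (simp add: P.emeasure_eq_measure)
    then show ?thesis using ev by simp
  qed
  have F3: "E (n + 1) = 1 - a * E n / 2" if n: "n \<ge> 1" for n
  proof -
    define h where "h = (\<lambda>z::real \<times> real. ennreal (exp (- \<mu> * max 0 (fst z - snd z))))"
    have hm: "h \<in> borel_measurable (borel \<Otimes>\<^sub>M borel)" unfolding h_def by measurable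
    have Wr: "W (Suc n) \<omega> = max 0 (B (Suc n) \<omega> - C n \<omega>)" for \<omega>
      using W_rec[OF n, of \<omega>] by (simp add: C_def)
    have Wm1: "W (Suc n) \<in> borel_measurable M" using Wm[of "Suc n"] by simp
    have "(\<integral>\<^sup>+\<omega>. ennreal (exp (- \<mu> * W (n+1) \<omega>)) \<partial>M) = (\<integral>\<^sup>+\<omega>. h (B (n+1) \<omega>, C n \<omega>) \<partial>M)"
      by (simp add: h_def Wr)
    also have "\<dots> = (\<integral>\<^sup>+\<omega>. (\<integral>\<^sup>+\<omega>'. h (B (n+1) \<omega>', C n \<omega>) \<partial>M) \<partial>M)"
      by (rule P.indep_nn_fubini[OF _ hm]) (use indB[OF n] in \<open>simp add: C_def[abs_def]\<close>)
    also have "\<dots> = (\<integral>\<^sup>+\<omega>. ennreal (1 - exp (- \<mu> * C n \<omega>) / 2) \<partial>M)"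
    proof (rule nn_integral_cong)
      fix \<omega> assume \<omega>: "\<omega> \<in> space M"
      have "(\<integral>\<^sup>+\<omega>'. h (B (n+1) \<omega>', C n \<omega>) \<partial>M)
          = (\<integral>\<^sup>+y. ennreal (exponential_density \<mu> y) * ennreal (exp (- \<mu> * max 0 (y - C n \<omega>))) \<partial>lborel)"
        unfolding h_def fst_conv snd_conv
        by (rule distributed_nn_integral[OF B_exp, symmetric]) (use n in auto)
      also have "\<dots> = ennreal (1 - exp (- \<mu> * C n \<omega>) / 2)"
        by (rule exp_laplace[OF \<mu>_pos Cnn[OF n \<omega>]])
      finally show "(\<integral>\<^sup>+\<omega>'. h (B (n+1) \<omega>', C n \<omega>) \<partial>M) = ennreal (1 - exp (- \<mu> * C n \<omega>) / 2)" .
    qed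
    also have "\<dots> = ennreal (P.expectation (\<lambda>\<omega>. 1 - exp (- \<mu> * C n \<omega>) / 2))"
    proof (rule P.nn_bounded)
      fix \<omega> assume "\<omega> \<in> space M"
      then have "0 \<le> exp (- \<mu> * C n \<omega>) \<and> exp (- \<mu> * C n \<omega>) \<le> 1" using bnd Cnn[OF n] by auto
      then show "0 \<le> 1 - exp (- \<mu> * C n \<omega>) / 2 \<and> 1 - exp (- \<mu> * C n \<omega>) / 2 \<le> 1" by linarith
    qed (use n in auto)
    finally have em: "(\<integral>\<^sup>+\<omega>. ennreal (exp (- \<mu> * W (n+1) \<omega>)) \<partial>M) = ennreal (P.expectation (\<lambda>\<omega>. 1 - exp (- \<mu> * C n \<omega>) / 2))" .
    have "(\<integral>\<^sup>+\<omega>. ennreal (exp (- \<mu> * W (n+1) \<omega>)) \<partial>M) = ennreal (E (n+1))"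
      unfolding E_def
    proof (rule P.nn_bounded)
      fix \<omega> assume "\<omega> \<in> space M"
      then show "0 \<le> exp (- \<mu> * W (n+1) \<omega>) \<and> exp (- \<mu> * W (n+1) \<omega>) \<le> 1" using bnd Wnn[of "n+1"] by auto
    qed (use Wm1 in simp)
    moreover have "0 \<le> E (n+1)" unfolding E_def by (rule Bochner_Integration.integral_nonneg) simp
    moreover have "0 \<le> P.expectation (\<lambda>\<omega>. 1 - exp (- \<mu> * C n \<omega>) / 2)"
    proof (rule Bochner_Integration.integral_nonneg)
      fix \<omega> assume "\<omega> \<in> space M"
      then have "0 \<le> exp (- \<mu> * C n \<omega>) \<and> exp (- \<mu> * C n \<omega>) \<le> 1" using bnd Cnn[OF n] by auto
      then show "0 \<le> 1 - exp (- \<mu> * C n \<omega>) / 2" by linarith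
    qed
    ultimately have "E (n+1) = P.expectation (\<lambda>\<omega>. 1 - exp (- \<mu> * C n \<omega>) / 2)"
      using em by simp
    also have "\<dots> = 1 - P.expectation (\<lambda>\<omega>. exp (- \<mu> * C n \<omega>)) / 2"
    proof -
      have "integrable M (\<lambda>\<omega>. exp (- \<mu> * C n \<omega>))" by (rule int_exp) (use n Cnn in auto)
      then show ?thesis
        by (subst Bochner_Integration.integral_diff) (auto simp: P.prob_space)
    qed
    finally show ?thesis using F1[OF n] by simp
  qed
  have E1: "E 1 = exp (- \<mu> * w1)" unfolding E_def W1 by (simp add: P.prob_space)
  have W2: "measure M {\<omega> \<in> space M. W 2 \<omega> = 0} = 1 - exp (- \<mu> * w1) * \<alpha> \<mu>"
  proof -
    have "{\<omega> \<in> space M. W 2 \<omega> = 0} = {\<omega> \<in> space M. W 2 \<omega> \<le> 0}"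
      using Wnn[of 2] by (auto intro: order.antisym)
    then show ?thesis using F2[of 1 0, unfolded one_add_one] E1 by (simp add: a_def)
  qed
  define p0 where "p0 = measure M {\<omega> \<in> space M. W 2 \<omega> = 0}"
  have p0: "p0 = 1 - a * E 1" using W2 E1 by (simp add: p0_def a_def)
  have Q: "a * E (Suc k) = 2 * a / (2 + a) + (- a / 2) ^ k * ((2 - a) / (2 + a) - p0)" for k
  proof (induction k)
    case 0
    have "2 + a \<noteq> 0" using a_nn by simp
    then have h: "2 * a / (2 + a) + (2 - a) / (2 + a) = 1"
      by (simp add: add_divide_distrib[symmetric])
    have "2 * a / (2 + a) + (- a / 2) ^ 0 * ((2 - a) / (2 + a) - p0) = 1 - p0"
      using h by simp
    then show ?case using p0 by simp
  next
    case (Suc k)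
    have "2 + a \<noteq> 0" using a_nn by simp
    have "a * E (Suc (Suc k)) = a - a / 2 * (a * E (Suc k))"
      using F3[of "Suc k"] by (simp add: right_diff_distrib)
    also have "\<dots> = 2 * a / (2 + a) + (- a / 2) ^ Suc k * ((2 - a) / (2 + a) - p0)"
      unfolding Suc power_Suc mult.assoc by (rule step_alg[OF \<open>2 + a \<noteq> 0\<close>])
    finally show ?case .
  qed
  show ?thesis
  proof (intro conjI allI impI)
    show "measure M {\<omega> \<in> space M. W 2 \<omega> = 0} = 1 - exp (- \<mu> * w1) * \<alpha> \<mu>" by (rule W2)
    fix n :: nat and x :: real assume n: "n \<ge> 1" and x: "x \<ge> 0"
    then obtain k where k: "n = Suc k" by (cases n) auto
    show "measure M {\<omega> \<in> space M. W (n + 1) \<omega> \<le> x} = 1 - exp (- \<mu> * x) *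
             (2 * \<alpha> \<mu> / (2 + \<alpha> \<mu>) + (- \<alpha> \<mu> / 2) ^ (n - 1) *
                ((2 - \<alpha> \<mu>) / (2 + \<alpha> \<mu>) - measure M {\<omega> \<in> space M. W 2 \<omega> = 0}))"
      using F2[OF n x] Q[of k] k by (simp add: a_def p0_def)
  qed
qed

end
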